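(* Let $\mathcal{G}=(G,\odot,\leq)$ be a real continuous Alo-group with $G$ an open interval of $\mathbb{R}$ and identity $e$, and let $\tilde A$ be an $n\times n$ $[\mathcal{G}]$-reciprocal IPCM with $n\geq 3$. Then $I_{[\mathcal{G}]}(\tilde A)\geq e$, and $I_{[\mathcal{G}]}(\tilde A)=e$ if and only if $\tilde A$ is $[\mathcal{G}]$-consistent.
   Context: An Alo-group $(G,\odot,\leq)$ is an Abelian group with a weak order $\leq$ such that $a\leq b\Rightarrow a\odot c\leq b\odot c$; real means $G\subseteq\mathbb{R}$ with usual order, continuous means $\odot$ is continuous. $a\div b=a\odot b^{(-1)}$, $\|a\|_{\mathcal{G}}=\max\{a,a^{(-1)}\}$, $d_{\mathcal{G}}(a,b)=\|a\div b\|_{\mathcal{G}}$. For $m\in\mathbb{N}$, $a^{(m)}$ is the $m$-fold $\odot$-product of $a$, and $a^{(1/m)}$ is the unique $x\in G$ with $x^{(m)}=a$. $[G]=\{[a^-,a^+]: a^-,a^+\in G,\ a^-\leq a^+\}$; $\tilde a^{(-1)}=[(a^+)^{(-1)},(a^-)^{(-1)}]$; $\tilde a\odot_{[G]}\tilde b=\{a\odot b: a\in\tilde a,b\in\tilde b\}$; $d_{[\mathcal{G}]}(\tilde a,\tilde b)=\max\{d_{\mathcal{G}}(a^-,b^-),d_{\mathcal{G}}(a^+,b^+)\}$. An IPCM $\tilde A=([a^-_{ij},a^+_{ij}])$ is an $n\times n$ matrix with entries in $[G]$; $[\mathcal{G}]$-reciprocal means $\tilde a_{ji}=\tilde a_{ij}^{(-1)}$;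 $[\mathcal{G}]$-consistent means $\tilde a_{ij}\odot_{[G]}\tilde a_{jk}\odot_{[G]}\tilde a_{ki}=\tilde a_{ik}\odot_{[G]}\tilde a_{kj}\odot_{[G]}\tilde a_{ji}$ for all $i,j,k$. Let $\tilde a_{ijk}=[a^-_{ij}\odot a^-_{jk}\odot a^-_{ki},\ a^+_{ij}\odot a^+_{jk}\odot a^+_{ki}]$ and $\tilde a_{ikj}=[a^-_{ik}\odot a^-_{kj}\odot a^-_{ji},\ a^+_{ik}\odot a^+_{kj}\odot a^+_{ji}]$. The $[\mathcal{G}]$-consistency index is $I_{[\mathcal{G}]}(\tilde A)=\Big(\bigodot_{i<j<k}d_{[\mathcal{G}]}(\tilde a_{ijk},\tilde a_{ikj})\Big)^{(1/|T|)}$, where $T=\{(i,j,k):i<j<k\}$, $|T|=n(n-1)(n-2)/6$. *)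

theory Defs
  imports "HOL-Analysis.Analysis"
begin

definition alo_group :: "real set \<Rightarrow> (real \<Rightarrow> real \<Rightarrow> real) \<Rightarrow> bool" where
  "alo_group G f \<longleftrightarrow>
     (\<forall>a\<in>G. \<forall>b\<in>G. f a b \<in> G) \<and>
     (\<forall>a\<in>G. \<forall>b\<in>G. \<forall>c\<in>G. f (f a b) c = f a (f b c)) \<and>
     (\<forall>a\<in>G. \<forall>b\<in>G. f a b = f b a) \<and>
     (\<exists>e\<in>G. (\<forall>a\<in>G. f a e = a) \<and> (\<forall>a\<in>G. \<exists>x\<in>G. f a x = e)) \<and>
     (\<forall>a\<in>G. \<forall>b\<in>G. \<forall>c\<in>G. a \<le> b \<longrightarrow> f a c \<le> f b c)"

definition continuous_alo_group :: "real set \<Rightarrow> (real \<Rightarrow> real \<Rightarrow> real) \<Rightarrow> bool" where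
  "continuous_alo_group G f \<longleftrightarrow> alo_group G f \<and>
     continuous_on (G \<times> G) (\<lambda>p. f (fst p) (snd p))"

definition open_interval :: "real set \<Rightarrow> bool" where
  "open_interval G \<longleftrightarrow> G \<noteq> {} \<and> open G \<and> is_interval G"

definition alo_unit :: "real set \<Rightarrow> (real \<Rightarrow> real \<Rightarrow> real) \<Rightarrow> real" where
  "alo_unit G f = (THE e. e \<in> G \<and> (\<forall>a\<in>G. f a e = a))"

definition alo_inv :: "real set \<Rightarrow> (real \<Rightarrow> real \<Rightarrow> real) \<Rightarrow> real \<Rightarrow> real" where
  "alo_inv G f a = (THE x. x \<in> G \<and> f a x = alo_unit G f)"

definition alo_div :: "real set \<Rightarrow> (real \<Rightarrow> real \<Rightarrow> real) \<Rightarrow> real \<Rightarrow> real \<Rightarrow> real" where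
  "alo_div G f a b = f a (alo_inv G f b)"

definition alo_norm :: "real set \<Rightarrow> (real \<Rightarrow> real \<Rightarrow> real) \<Rightarrow> real \<Rightarrow> real" where
  "alo_norm G f a = max a (alo_inv G f a)"

definition alo_dist :: "real set \<Rightarrow> (real \<Rightarrow> real \<Rightarrow> real) \<Rightarrow> real \<Rightarrow> real \<Rightarrow> real" where
  "alo_dist G f a b = alo_norm G f (alo_div G f a b)"

fun alo_pow :: "real set \<Rightarrow> (real \<Rightarrow> real \<Rightarrow> real) \<Rightarrow> real \<Rightarrow> nat \<Rightarrow> real" where
  "alo_pow G f a 0 = alo_unit G f"
| "alo_pow G f a (Suc m) = f a (alo_pow G f a m)"

definition alo_root :: "real set \<Rightarrow> (real \<Rightarrow> real \<Rightarrow> real) \<Rightarrow> real \<Rightarrow> nat \<Rightarrow> real" where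
  "alo_root G f a m = (THE x. x \<in> G \<and> alo_pow G f x m = a)"

text \<open>Intervals of [G] are represented by pairs (a^-, a^+).\<close>
definition interval_set :: "real set \<Rightarrow> real \<times> real \<Rightarrow> real set" where
  "interval_set G a = {x \<in> G. fst a \<le> x \<and> x \<le> snd a}"

definition ival_inv :: "real set \<Rightarrow> (real \<Rightarrow> real \<Rightarrow> real) \<Rightarrow> real \<times> real \<Rightarrow> real \<times> real" where
  "ival_inv G f a = (alo_inv G f (snd a), alo_inv G f (fst a))"

definition ival_mult_set :: "(real \<Rightarrow> real \<Rightarrow> real) \<Rightarrow> real set \<Rightarrow> real set \<Rightarrow> real set" where
  "ival_mult_set f A B = {f a b | a b. a \<in> A \<and> b \<in> B}"

definition ival_dist :: "real set \<Rightarrow> (real \<Rightarrow> real \<Rightarrow> real) \<Rightarrow> real \<times> real \<Rightarrow> real \<times> real \<Rightarrow> real" where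
  "ival_dist G f a b = max (alo_dist G f (fst a) (fst b)) (alo_dist G f (snd a) (snd b))"

definition is_IPCM :: "real set \<Rightarrow> nat \<Rightarrow> (nat \<Rightarrow> nat \<Rightarrow> real \<times> real) \<Rightarrow> bool" where
  "is_IPCM G n A \<longleftrightarrow> (\<forall>i<n. \<forall>j<n. fst (A i j) \<in> G \<and> snd (A i j) \<in> G \<and> fst (A i j) \<le> snd (A i j))"

definition ipcm_reciprocal :: "real set \<Rightarrow> (real \<Rightarrow> real \<Rightarrow> real) \<Rightarrow> nat \<Rightarrow> (nat \<Rightarrow> nat \<Rightarrow> real \<times> real) \<Rightarrow> bool" where
  "ipcm_reciprocal G f n A \<longleftrightarrow> (\<forall>i<n. \<forall>j<n. A j i = ival_inv G f (A i j))"

definition ipcm_consistent :: "real set \<Rightarrow> (real \<Rightarrow> real \<Rightarrow> real) \<Rightarrow> nat \<Rightarrow> (nat \<Rightarrow> nat \<Rightarrow> real \<times> real) \<Rightarrow> bool" where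
  "ipcm_consistent G f n A \<longleftrightarrow> (\<forall>i<n. \<forall>j<n. \<forall>k<n.
     ival_mult_set f (ival_mult_set f (interval_set G (A i j)) (interval_set G (A j k))) (interval_set G (A k i))
   = ival_mult_set f (ival_mult_set f (interval_set G (A i k)) (interval_set G (A k j))) (interval_set G (A j i)))"

definition triple_ijk :: "(real \<Rightarrow> real \<Rightarrow> real) \<Rightarrow> (nat \<Rightarrow> nat \<Rightarrow> real \<times> real) \<Rightarrow> nat \<Rightarrow> nat \<Rightarrow> nat \<Rightarrow> real \<times> real" where
  "triple_ijk f A i j k =
     (f (f (fst (A i j)) (fst (A j k))) (fst (A k i)), f (f (snd (A i j)) (snd (A j k))) (snd (A k i)))"

definition triples :: "nat \<Rightarrow> (nat \<times> nat \<times> nat) list" where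
  "triples n = [(i, j, k). i \<leftarrow> [0..<n], j \<leftarrow> [Suc i..<n], k \<leftarrow> [Suc j..<n]]"

definition consistency_index :: "real set \<Rightarrow> (real \<Rightarrow> real \<Rightarrow> real) \<Rightarrow> nat \<Rightarrow> (nat \<Rightarrow> nat \<Rightarrow> real \<times> real) \<Rightarrow> real" where
  "consistency_index G f n A =
     alo_root G f
       (foldr (\<lambda>(i, j, k) acc. f (ival_dist G f (triple_ijk f A i j k) (triple_ijk f A i k j)) acc)
          (triples n) (alo_unit G f))
       (card {(i, j, k). i < j \<and> j < k \<and> k < n})"

end

theory Submission
  imports Defs
begin

locale aloL =
  fixes G :: "real set" and f :: "real \<Rightarrow> real \<Rightarrow> real"
  assumes AG: "alo_group G f"
begin

lemma closed: "a \<in> G \<Longrightarrow> b \<in> G \<Longrightarrow> f a b \<in> G"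
  using AG unfolding alo_group_def by blast

lemma assoc: "a \<in> G \<Longrightarrow> b \<in> G \<Longrightarrow> c \<in> G \<Longrightarrow> f (f a b) c = f a (f b c)"
  using AG unfolding alo_group_def by blast

lemma comm: "a \<in> G \<Longrightarrow> b \<in> G \<Longrightarrow> f a b = f b a"
  using AG unfolding alo_group_def by blast

lemma mono1: "a \<in> G \<Longrightarrow> b \<in> G \<Longrightarrow> c \<in> G \<Longrightarrow> a \<le> b \<Longrightarrow> f a c \<le> f b c"
  using AG unfolding alo_group_def by blast

lemma ex_unit: "\<exists>e\<in>G. (\<forall>a\<in>G. f a e = a) \<and> (\<forall>a\<in>G. \<exists>x\<in>G. f a x = e)"
  using AG unfolding alo_group_def by blast

lemma unit_unique:
  assumes "u \<in> G" "\<forall>a\<in>G. f a u = a"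
  shows "alo_unit G f = u"
  unfolding alo_unit_def
proof (rule the_equality)
  show "u \<in> G \<and> (\<forall>a\<in>G. f a u = a)" using assms by blast
next
  fix e' assume h: "e' \<in> G \<and> (\<forall>a\<in>G. f a e' = a)"
  then have "f u e' = u" using assms by blast
  moreover have "f e' u = e'" using h assms by blast
  ultimately show "e' = u" using comm h assms by metis
qed

lemma unit_props: "alo_unit G f \<in> G \<and> (\<forall>a\<in>G. f a (alo_unit G f) = a) \<and> (\<forall>a\<in>G. \<exists>x\<in>G. f a x = alo_unit G f)"
proof -
  obtain u where "u \<in> G" "\<forall>a\<in>G. f a u = a" "\<forall>a\<in>G. \<exists>x\<in>G. f a x = u" using ex_unit by blast
  then show ?thesis using unit_unique by simp
qed

abbreviation "ee \<equiv> alo_unit G f"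

lemma e_in: "ee \<in> G" using unit_props by blast
lemma e_right: "a \<in> G \<Longrightarrow> f a ee = a" using unit_props by blast
lemma e_left: "a \<in> G \<Longrightarrow> f ee a = a" using e_right comm e_in by metis

lemma inv_props: assumes "a \<in> G" shows "alo_inv G f a \<in> G \<and> f a (alo_inv G f a) = ee"
proof -
  obtain x where x: "x \<in> G" "f a x = ee" using unit_props assms by blast
  have "alo_inv G f a = x" unfolding alo_inv_def
  proof (rule the_equality)
    show "x \<in> G \<and> f a x = ee" using x by blast
  next
    fix y assume y: "y \<in> G \<and> f a y = ee"
    have "y = f y (f a x)" using x y e_right by simp
    also have "\<dots> = f (f y a) x" using assoc x y assms by simp
    also have "\<dots> = f (f a y) x" using comm y assms by simp
    also have "\<dots> = x" using y e_left x by simp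
    finally show "y = x" .
  qed
  then show ?thesis using x by simp
qed

lemma cancel: assumes "a \<in> G" "b \<in> G" "c \<in> G" "f a c = f b c" shows "a = b"
proof -
  let ?i = "alo_inv G f c"
  have i: "?i \<in> G" "f c ?i = ee" using inv_props assms by auto
  have "f (f a c) ?i = f a (f c ?i)" using assoc assms i by blast
  then have "a = f (f a c) ?i" using assms i e_right by simp
  also have "\<dots> = f (f b c) ?i" using assms by simp
  also have "\<dots> = f b (f c ?i)" using assoc assms i by blast
  also have "\<dots> = b" using assms i e_right by simp
  finally show ?thesis .
qed

lemma smono1: "a \<in> G \<Longrightarrow> b \<in> G \<Longrightarrow> c \<in> G \<Longrightarrow> a < b \<Longrightarrow> f a c < f b c"
proof -
  assume h: "a \<in> G" "b \<in> G" "c \<in> G" "a < b"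
  then have "f a c \<le> f b c" using mono1 by simp
  moreover have "f a c \<noteq> f b c" using cancel h by force
  ultimately show ?thesis by simp
qed

lemma mono2: "a \<in> G \<Longrightarrow> b \<in> G \<Longrightarrow> c \<in> G \<Longrightarrow> d \<in> G \<Longrightarrow> a \<le> b \<Longrightarrow> c \<le> d \<Longrightarrow> f a c \<le> f b d"
  by (metis mono1 comm order_trans)

lemma smono2: "a \<in> G \<Longrightarrow> b \<in> G \<Longrightarrow> c \<in> G \<Longrightarrow> d \<in> G \<Longrightarrow> a \<le> b \<Longrightarrow> c < d \<Longrightarrow> f a c < f b d"
  by (metis mono1 smono1 comm order_le_less_trans)

lemma ge_e_mult: "a \<in> G \<Longrightarrow> b \<in> G \<Longrightarrow> ee \<le> a \<Longrightarrow> ee \<le> b \<Longrightarrow> ee \<le> f a b \<and> (f a b = ee \<longleftrightarrow> a = ee \<and> b = ee)"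
proof -
  assume h: "a \<in> G" "b \<in> G" "ee \<le> a" "ee \<le> b"
  have "f ee ee \<le> f a b" using mono2 h e_in by blast
  moreover have "f ee ee = ee" using e_in e_right by simp
  moreover have "a \<noteq> ee \<or> b \<noteq> ee \<Longrightarrow> f ee ee < f a b"
    using h e_in smono2 comm by (metis order_le_less)
  ultimately show ?thesis by (metis less_irrefl)
qed

lemma inv_sign: assumes "a \<in> G" shows "(a < ee \<longrightarrow> ee < alo_inv G f a) \<and> (ee < a \<longrightarrow> alo_inv G f a < ee)"
proof -
  have i: "alo_inv G f a \<in> G" "f a (alo_inv G f a) = ee" using inv_props assms by auto
  show ?thesis
  proof (intro conjI impI)
    assume "a < ee"
    then have "f a (alo_inv G f a) < f ee (alo_inv G f a)" using smono1 assms i e_in by blast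
    then show "ee < alo_inv G f a" using i e_left by simp
  next
    assume "ee < a"
    then have "f ee (alo_inv G f a) < f a (alo_inv G f a)" using smono1 assms i e_in by blast
    then show "alo_inv G f a < ee" using i e_left by simp
  qed
qed

lemma inv_e: "alo_inv G f ee = ee"
  using inv_props[OF e_in] e_left e_in by (metis cancel e_right)

lemma norm_props: assumes "a \<in> G" shows "alo_norm G f a \<in> G \<and> ee \<le> alo_norm G f a \<and> (alo_norm G f a = ee \<longleftrightarrow> a = ee)"
proof -
  have i: "alo_inv G f a \<in> G" using inv_props assms by auto
  have s: "(a < ee \<longrightarrow> ee < alo_inv G f a) \<and> (ee < a \<longrightarrow> alo_inv G f a < ee)" using inv_sign assms by blast
  show ?thesis unfolding alo_norm_def using i assms s inv_e
    by (cases "a < ee"; cases "a = ee"; auto simp: max_def)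
qed

lemma div_props: assumes "a \<in> G" "b \<in> G" shows "alo_div G f a b \<in> G \<and> (alo_div G f a b = ee \<longleftrightarrow> a = b)"
proof -
  have i: "alo_inv G f b \<in> G" "f b (alo_inv G f b) = ee" using inv_props assms by auto
  have "alo_div G f a b = ee \<longleftrightarrow> f a (alo_inv G f b) = f b (alo_inv G f b)"
    unfolding alo_div_def using i by simp
  also have "\<dots> \<longleftrightarrow> a = b" using cancel assms i by metis
  finally show ?thesis unfolding alo_div_def using closed assms i by simp
qed

lemma dist_props: assumes "a \<in> G" "b \<in> G" shows "alo_dist G f a b \<in> G \<and> ee \<le> alo_dist G f a b \<and> (alo_dist G f a b = ee \<longleftrightarrow> a = b)"
  unfolding alo_dist_def using div_props[OF assms] norm_props by metis

lemma idist_props: assumes "fst a \<in> G" "snd a \<in> G" "fst b \<in> G" "snd b \<in> G"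
  shows "ival_dist G f a b \<in> G \<and> ee \<le> ival_dist G f a b \<and> (ival_dist G f a b = ee \<longleftrightarrow> a = b)"
proof -
  have d1: "alo_dist G f (fst a) (fst b) \<in> G \<and> ee \<le> alo_dist G f (fst a) (fst b) \<and> (alo_dist G f (fst a) (fst b) = ee \<longleftrightarrow> fst a = fst b)"
    using dist_props assms by blast
  have d2: "alo_dist G f (snd a) (snd b) \<in> G \<and> ee \<le> alo_dist G f (snd a) (snd b) \<and> (alo_dist G f (snd a) (snd b) = ee \<longleftrightarrow> snd a = snd b)"
    using dist_props assms by blast
  show ?thesis unfolding ival_dist_def using d1 d2
    by (auto simp: max_def prod_eq_iff)
qed

lemma foldr_props:
  assumes "\<forall>x\<in>set xs. g x \<in> G \<and> ee \<le> g x"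
  shows "foldr (\<lambda>x acc. f (g x) acc) xs ee \<in> G \<and> ee \<le> foldr (\<lambda>x acc. f (g x) acc) xs ee
     \<and> (foldr (\<lambda>x acc. f (g x) acc) xs ee = ee \<longleftrightarrow> (\<forall>x\<in>set xs. g x = ee))"
  using assms
proof (induction xs)
  case Nil then show ?case using e_in by simp
next
  case (Cons a xs)
  then have h: "g a \<in> G" "ee \<le> g a" by auto
  from Cons have ih: "foldr (\<lambda>x acc. f (g x) acc) xs ee \<in> G \<and> ee \<le> foldr (\<lambda>x acc. f (g x) acc) xs ee
     \<and> (foldr (\<lambda>x acc. f (g x) acc) xs ee = ee \<longleftrightarrow> (\<forall>x\<in>set xs. g x = ee))" by auto
  show ?case using ge_e_mult[of "g a" "foldr (\<lambda>x acc. f (g x) acc) xs ee"] h ih closed by auto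
qed

end

locale aloC = aloL +
  assumes CT: "continuous_on (G \<times> G) (\<lambda>p. f (fst p) (snd p))"
    and IV: "is_interval G"
begin

lemma in_G_between: "a \<in> G \<Longrightarrow> b \<in> G \<Longrightarrow> a \<le> x \<Longrightarrow> x \<le> b \<Longrightarrow> x \<in> G"
  using IV unfolding is_interval_1 by blast

lemma pow_in: "x \<in> G \<Longrightarrow> alo_pow G f x m \<in> G"
  by (induction m) (auto simp: e_in closed)

lemma pow_e: "alo_pow G f ee m = ee"
  by (induction m) (auto simp: e_in e_right)

lemma pow_mono: "x \<in> G \<Longrightarrow> y \<in> G \<Longrightarrow> x \<le> y \<Longrightarrow> alo_pow G f x m \<le> alo_pow G f y m"
proof (induction m)
  case 0 then show ?case by simp
next
  case (Suc k) then show ?case using mono2[of x y "alo_pow G f x k" "alo_pow G f y k"] pow_in by simp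
qed

lemma pow_smono: "x \<in> G \<Longrightarrow> y \<in> G \<Longrightarrow> x < y \<Longrightarrow> m \<ge> 1 \<Longrightarrow> alo_pow G f x m < alo_pow G f y m"
proof -
  assume h: "x \<in> G" "y \<in> G" "x < y" "m \<ge> 1"
  then obtain k where m: "m = Suc k" by (cases m) auto
  have "f x (alo_pow G f x k) < f y (alo_pow G f y k)"
  proof -
    have "f x (alo_pow G f x k) < f y (alo_pow G f x k)" using smono1 h pow_in by blast
    also have "\<dots> \<le> f y (alo_pow G f y k)"
      using mono2[of y y "alo_pow G f x k" "alo_pow G f y k"] pow_in pow_mono h by simp
    finally show ?thesis .
  qed
  then show ?thesis using m by simp
qed

lemma pow_ge_e: "x \<in> G \<Longrightarrow> ee \<le> x \<Longrightarrow> ee \<le> alo_pow G f x m"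
  by (induction m) (auto simp: pow_in ge_e_mult)

lemma pow_ge_x: "x \<in> G \<Longrightarrow> ee \<le> x \<Longrightarrow> m \<ge> 1 \<Longrightarrow> x \<le> alo_pow G f x m"
proof -
  assume h: "x \<in> G" "ee \<le> x" "m \<ge> 1"
  then obtain k where m: "m = Suc k" by (cases m) auto
  have "f x ee \<le> f x (alo_pow G f x k)" using mono2 h pow_in pow_ge_e e_in by simp
  then show ?thesis using m e_right h by simp
qed

lemma pow_cont: "continuous_on G (\<lambda>x. alo_pow G f x m)"
proof (induction m)
  case 0 then show ?case by simp
next
  case (Suc k)
  have "continuous_on G (\<lambda>x. (\<lambda>p. f (fst p) (snd p)) (x, alo_pow G f x k))"
  proof (rule continuous_on_compose2[OF CT])
    show "continuous_on G (\<lambda>x. (x, alo_pow G f x k))"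
      by (intro continuous_on_Pair continuous_on_id Suc)
    show "(\<lambda>x. (x, alo_pow G f x k)) ` G \<subseteq> G \<times> G" using pow_in by auto
  qed
  then show ?case by simp
qed

lemma root_props: assumes "P \<in> G" "ee \<le> P" "m \<ge> 1"
  shows "alo_root G f P m \<in> G \<and> ee \<le> alo_root G f P m \<and> (alo_root G f P m = ee \<longleftrightarrow> P = ee)"
proof -
  have sub: "{ee..P} \<subseteq> G" using in_G_between[OF e_in assms(1)] by auto
  have "\<exists>x. ee \<le> x \<and> x \<le> P \<and> alo_pow G f x m = P"
  proof (rule IVT')
    show "alo_pow G f ee m \<le> P" using pow_e assms by simp
    show "P \<le> alo_pow G f P m" using pow_ge_x assms by simp
    show "ee \<le> P" by (rule assms)
    show "continuous_on {ee..P} (\<lambda>x. alo_pow G f x m)" using continuous_on_subset[OF pow_cont sub] .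
  qed
  then obtain x where x: "ee \<le> x" "x \<le> P" "alo_pow G f x m = P" by blast
  have xG: "x \<in> G" using sub x by auto
  have r: "alo_root G f P m = x" unfolding alo_root_def
  proof (rule the_equality)
    show "x \<in> G \<and> alo_pow G f x m = P" using xG x by simp
  next
    fix y assume y: "y \<in> G \<and> alo_pow G f y m = P"
    show "y = x"
    proof (rule ccontr)
      assume "y \<noteq> x"
      then have "y < x \<or> x < y" by linarith
      then show False
      proof
        assume "y < x"
        then have "alo_pow G f y m < alo_pow G f x m" using pow_smono[of y x m] xG y assms(3) by blast
        then show False using y x(3) by simp
      next
        assume "x < y"
        then have "alo_pow G f x m < alo_pow G f y m" using pow_smono[of x y m] xG y assms(3) by blast
        then show False using y x(3) by simp
      qed
    qed
  qed
  have "x = ee \<longleftrightarrow> P = ee"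
  proof
    assume "x = ee" then show "P = ee" using x(3) pow_e by metis
  next
    assume "P = ee" then show "x = ee" using x(1,2) by linarith
  qed
  then show ?thesis using r xG x by simp
qed

lemma mult_Icc: assumes "a \<in> G" "b \<in> G" "c \<in> G" "d \<in> G" "a \<le> b" "c \<le> d"
  shows "ival_mult_set f {a..b} {c..d} = {f a c..f b d}"
proof
  have ab: "{a..b} \<subseteq> G" "{c..d} \<subseteq> G"
    using in_G_between[OF assms(1) assms(2)] in_G_between[OF assms(3) assms(4)] by auto
  show "ival_mult_set f {a..b} {c..d} \<subseteq> {f a c..f b d}"
  proof
    fix z assume "z \<in> ival_mult_set f {a..b} {c..d}"
    then obtain x y where z: "z = f x y" "x \<in> {a..b}" "y \<in> {c..d}" unfolding ival_mult_set_def by blast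
    then have "x \<in> G" "y \<in> G" using ab by auto
    then have "f a c \<le> f x y" "f x y \<le> f b d" using mono2 z assms by auto
    then show "z \<in> {f a c..f b d}" using z by simp
  qed
  let ?S = "(\<lambda>p. f (fst p) (snd p)) ` ({a..b} \<times> {c..d})"
  have "connected ?S"
  proof (rule connected_continuous_image)
    show "continuous_on ({a..b} \<times> {c..d}) (\<lambda>p. f (fst p) (snd p))"
      by (rule continuous_on_subset[OF CT]) (use ab in blast)
    show "connected ({a..b} \<times> {c..d})" by (intro connected_Times connected_Icc)
  qed
  then have iS: "is_interval ?S" using is_interval_connected_1 by blast
  have m1: "f a c \<in> ?S" by (rule image_eqI[where x="(a,c)"]) (use assms in auto)
  have m2: "f b d \<in> ?S" by (rule image_eqI[where x="(b,d)"]) (use assms in auto)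
  show "{f a c..f b d} \<subseteq> ival_mult_set f {a..b} {c..d}"
  proof
    fix z assume "z \<in> {f a c..f b d}"
    then have "z \<in> ?S" using iS m1 m2 unfolding is_interval_1 by (meson atLeastAtMost_iff)
    then obtain p where "p \<in> {a..b} \<times> {c..d}" "z = f (fst p) (snd p)" by blast
    then show "z \<in> ival_mult_set f {a..b} {c..d}" unfolding ival_mult_set_def by force
  qed
qed

lemma iset: "fst p \<in> G \<Longrightarrow> snd p \<in> G \<Longrightarrow> interval_set G p = {fst p..snd p}"
  unfolding interval_set_def using in_G_between[of "fst p" "snd p"] by auto

lemma triple_set: assumes "is_IPCM G n A" "i < n" "j < n" "k < n"
  shows "ival_mult_set f (ival_mult_set f (interval_set G (A i j)) (interval_set G (A j k))) (interval_set G (A k i))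
      = {fst (triple_ijk f A i j k)..snd (triple_ijk f A i j k)}
    \<and> fst (triple_ijk f A i j k) \<le> snd (triple_ijk f A i j k)
    \<and> fst (triple_ijk f A i j k) \<in> G \<and> snd (triple_ijk f A i j k) \<in> G"
proof -
  have e1: "fst (A i j) \<in> G" "snd (A i j) \<in> G" "fst (A i j) \<le> snd (A i j)"
    using assms unfolding is_IPCM_def by blast+
  have e2: "fst (A j k) \<in> G" "snd (A j k) \<in> G" "fst (A j k) \<le> snd (A j k)"
    using assms unfolding is_IPCM_def by blast+
  have e3: "fst (A k i) \<in> G" "snd (A k i) \<in> G" "fst (A k i) \<le> snd (A k i)"
    using assms unfolding is_IPCM_def by blast+
  have m1: "ival_mult_set f (interval_set G (A i j)) (interval_set G (A j k))
     = {f (fst (A i j)) (fst (A j k)) .. f (snd (A i j)) (snd (A j k))}"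
    using iset[of "A i j"] iset[of "A j k"] e1 e2 mult_Icc[of "fst (A i j)" "snd (A i j)" "fst (A j k)" "snd (A j k)"] by simp
  have c1: "f (fst (A i j)) (fst (A j k)) \<in> G" "f (snd (A i j)) (snd (A j k)) \<in> G"
    "f (fst (A i j)) (fst (A j k)) \<le> f (snd (A i j)) (snd (A j k))"
    using closed[of "fst (A i j)" "fst (A j k)"] closed[of "snd (A i j)" "snd (A j k)"]
      mono2[of "fst (A i j)" "snd (A i j)" "fst (A j k)" "snd (A j k)"] e1 e2 by auto
  have m2: "ival_mult_set f (ival_mult_set f (interval_set G (A i j)) (interval_set G (A j k))) (interval_set G (A k i))
     = {fst (triple_ijk f A i j k)..snd (triple_ijk f A i j k)}"
    unfolding m1 triple_ijk_def using iset[of "A k i"] e3 c1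
      mult_Icc[of "f (fst (A i j)) (fst (A j k))" "f (snd (A i j)) (snd (A j k))" "fst (A k i)" "snd (A k i)"] by simp
  have "f (f (fst (A i j)) (fst (A j k))) (fst (A k i)) \<le> f (f (snd (A i j)) (snd (A j k))) (snd (A k i))"
    using mono2[of "f (fst (A i j)) (fst (A j k))" "f (snd (A i j)) (snd (A j k))" "fst (A k i)" "snd (A k i)"] c1 e3 by blast
  moreover have "f (f (fst (A i j)) (fst (A j k))) (fst (A k i)) \<in> G" "f (f (snd (A i j)) (snd (A j k))) (snd (A k i)) \<in> G"
    using closed c1 e3 by blast+
  ultimately show ?thesis using m2 unfolding triple_ijk_def by simp
qed

lemma cons_iff: assumes "is_IPCM G n A"
  shows "ipcm_consistent G f n A \<longleftrightarrow> (\<forall>i<n. \<forall>j<n. \<forall>k<n. triple_ijk f A i j k = triple_ijk f A i k j)"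
proof -
  have "\<And>i j k. i < n \<Longrightarrow> j < n \<Longrightarrow> k < n \<Longrightarrow>
    (ival_mult_set f (ival_mult_set f (interval_set G (A i j)) (interval_set G (A j k))) (interval_set G (A k i))
   = ival_mult_set f (ival_mult_set f (interval_set G (A i k)) (interval_set G (A k j))) (interval_set G (A j i)))
    \<longleftrightarrow> triple_ijk f A i j k = triple_ijk f A i k j"
  proof -
    fix i j k assume h: "i < n" "j < n" "k < n"
    show "?thesis i j k"
      using triple_set[OF assms h] triple_set[OF assms h(1) h(3) h(2)]
      by (simp add: prod_eq_iff)
  qed
  then show ?thesis unfolding ipcm_consistent_def by simp
qed

lemma rot3: "x \<in> G \<Longrightarrow> y \<in> G \<Longrightarrow> z \<in> G \<Longrightarrow> f (f x y) z = f (f y z) x"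
proof -
  assume h: "x \<in> G" "y \<in> G" "z \<in> G"
  then have "f (f x y) z = f x (f y z)" using assoc by blast
  also have "\<dots> = f (f y z) x" using comm[of x "f y z"] closed[of y z] h by blast
  finally show ?thesis .
qed

lemma triple_rot: assumes "is_IPCM G n A" "i < n" "j < n" "k < n"
  shows "triple_ijk f A j k i = triple_ijk f A i j k"
proof -
  have "fst (A i j) \<in> G" "snd (A i j) \<in> G" "fst (A j k) \<in> G" "snd (A j k) \<in> G"
    "fst (A k i) \<in> G" "snd (A k i) \<in> G"
    using assms unfolding is_IPCM_def by blast+
  then show ?thesis unfolding triple_ijk_def
    using rot3[of "fst (A i j)" "fst (A j k)" "fst (A k i)"] rot3[of "snd (A i j)" "snd (A j k)" "snd (A k i)"] by simp
qed

lemma all_from_sorted: assumes "is_IPCM G n A"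
  and O: "\<forall>i j k. i < j \<longrightarrow> j < k \<longrightarrow> k < n \<longrightarrow> triple_ijk f A i j k = triple_ijk f A i k j"
  shows "\<forall>i<n. \<forall>j<n. \<forall>k<n. triple_ijk f A i j k = triple_ijk f A i k j"
proof (intro allI impI)
  define C where "C i j k \<longleftrightarrow> triple_ijk f A i j k = triple_ijk f A i k j" for i j k
  have T: "\<And>i j k. i < n \<Longrightarrow> j < n \<Longrightarrow> k < n \<Longrightarrow> triple_ijk f A j k i = triple_ijk f A i j k"
    using triple_rot[OF assms(1)] by blast
  have R: "\<And>i j k. i < n \<Longrightarrow> j < n \<Longrightarrow> k < n \<Longrightarrow> C j k i = C i j k"
  proof -
    fix i j k assume h: "i < n" "j < n" "k < n"
    have "triple_ijk f A j i k = triple_ijk f A k j i" using T[of k j i] h by simp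
    also have "\<dots> = triple_ijk f A i k j" using T[of i k j] h by simp
    finally show "C j k i = C i j k" unfolding C_def using T[of i j k] h by simp
  qed
  have S: "\<And>i j k. C i j k = C i k j" unfolding C_def by auto
  have O': "\<And>i j k. i < j \<Longrightarrow> j < k \<Longrightarrow> k < n \<Longrightarrow> C i j k" using O unfolding C_def by blast
  fix i j k assume h: "i < n" "j < n" "k < n"
  have "C i j k"
  proof (cases "i = j \<or> j = k \<or> i = k")
    case True
    then show ?thesis
    proof (elim disjE)
      assume "i = j" then show ?thesis unfolding C_def using T[of i i k] h by simp
    next
      assume "j = k" then show ?thesis unfolding C_def by simp
    next
      assume "i = k" then show ?thesis unfolding C_def using T[of i i j] h by simp
    qed
  next
    case False
    then have d: "i \<noteq> j" "j \<noteq> k" "i \<noteq> k" by auto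
    show ?thesis
    proof (cases "i < j")
      case ij: True
      show ?thesis
      proof (cases "j < k")
        case True then show ?thesis using O' ij h by blast
      next
        case False
        then have "k < j" using d by simp
        then show ?thesis
        proof (cases "i < k")
          case True then show ?thesis using O'[of i k j] S \<open>k < j\<close> h by blast
        next
          case False then have "k < i" using d by simp
          then show ?thesis using O'[of k i j] R[of k i j] ij h by simp
        qed
      qed
    next
      case False
      then have ji: "j < i" using d by simp
      show ?thesis
      proof (cases "i < k")
        case True then show ?thesis using O'[of j i k] R[of j i k] S[of i j k] ji h by simp
      next
        case False
        then have "k < i" using d by simp
        then show ?thesis
        proof (cases "j < k")
          case True then show ?thesis using O'[of j k i] R[of i j k] \<open>k < i\<close> h by simp
        next
          case False then have "k < j" using d by simp
          then show ?thesis using O'[of k j i] S[of k j i] R[of k i j] ji h by simp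
        qed
      qed
    qed
  qed
  then show "triple_ijk f A i j k = triple_ijk f A i k j" unfolding C_def .
qed

lemma main: assumes "is_IPCM G n A" "n \<ge> 3"
  shows "consistency_index G f n A \<ge> ee \<and> (consistency_index G f n A = ee \<longleftrightarrow> ipcm_consistent G f n A)"
proof -
  let ?T = "{(i, j, k). i < j \<and> j < k \<and> k < n}"
  have setT: "set (triples n) = ?T"
  proof
    show "set (triples n) \<subseteq> ?T" unfolding triples_def by auto
    show "?T \<subseteq> set (triples n)"
    proof
      fix x assume "x \<in> ?T"
      then obtain i j k where x: "x = (i, j, k)" "i < j" "j < k" "k < n" by blast
      have "x \<in> (\<lambda>c. (i, j, c)) ` {Suc j..<n}" using x by auto
      then have "\<exists>a\<in>{0..<n}. \<exists>b\<in>{Suc a..<n}. x \<in> (\<lambda>c. (a, b, c)) ` {Suc b..<n}"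
        using x by (intro bexI[of _ i] bexI[of _ j]) auto
      then show "x \<in> set (triples n)" unfolding triples_def by simp
    qed
  qed
  have finT: "finite ?T"
    by (rule finite_subset[of _ "{..<n} \<times> {..<n} \<times> {..<n}"]) auto
  have "(0, 1, 2) \<in> ?T" using assms(2) by auto
  then have "?T \<noteq> {}" by blast
  then have "card ?T \<noteq> 0" using finT by simp
  then have cT: "card ?T \<ge> 1" by linarith
  define g where "g = (\<lambda>(i, j, k). ival_dist G f (triple_ijk f A i j k) (triple_ijk f A i k j))"
  have feq: "(\<lambda>(i, j, k) acc. f (ival_dist G f (triple_ijk f A i j k) (triple_ijk f A i k j)) acc)
     = (\<lambda>x acc. f (g x) acc)"
    unfolding g_def by (auto simp: fun_eq_iff split: prod.splits)
  have gp: "\<forall>x\<in>set (triples n). g x \<in> G \<and> ee \<le> g x \<and> (g x = ee \<longleftrightarrow>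
      (case x of (i, j, k) \<Rightarrow> triple_ijk f A i j k = triple_ijk f A i k j))"
  proof
    fix x assume "x \<in> set (triples n)"
    then obtain i j k where x: "x = (i, j, k)" "i < j" "j < k" "k < n" using setT by auto
    then have h: "i < n" "j < n" "k < n" by auto
    show "g x \<in> G \<and> ee \<le> g x \<and> (g x = ee \<longleftrightarrow>
      (case x of (i, j, k) \<Rightarrow> triple_ijk f A i j k = triple_ijk f A i k j))"
      unfolding g_def x using idist_props triple_set[OF assms(1) h] triple_set[OF assms(1) h(1) h(3) h(2)]
      by simp
  qed
  let ?P = "foldr (\<lambda>x acc. f (g x) acc) (triples n) ee"
  have P: "?P \<in> G \<and> ee \<le> ?P \<and> (?P = ee \<longleftrightarrow> (\<forall>x\<in>set (triples n). g x = ee))"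
  proof -
    have gp': "\<forall>x\<in>set (triples n). g x \<in> G \<and> ee \<le> g x" using gp by blast
    show ?thesis by (rule foldr_props[OF gp'])
  qed
  have ci: "consistency_index G f n A = alo_root G f ?P (card ?T)"
    by (simp only: consistency_index_def feq)
  have r: "alo_root G f ?P (card ?T) \<in> G \<and> ee \<le> alo_root G f ?P (card ?T) \<and> (alo_root G f ?P (card ?T) = ee \<longleftrightarrow> ?P = ee)"
  proof -
    have "?P \<in> G" "ee \<le> ?P" using P by blast+
    then show ?thesis using root_props[OF _ _ cT] by blast
  qed
  have "(\<forall>x\<in>set (triples n). g x = ee) \<longleftrightarrow>
     (\<forall>i j k. i < j \<longrightarrow> j < k \<longrightarrow> k < n \<longrightarrow> triple_ijk f A i j k = triple_ijk f A i k j)"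
    (is "?L \<longleftrightarrow> ?R")
  proof -
    have "?L \<longleftrightarrow> (\<forall>x\<in>set (triples n). case x of (i, j, k) \<Rightarrow> triple_ijk f A i j k = triple_ijk f A i k j)"
    proof (rule ball_cong[OF refl])
      fix x assume "x \<in> set (triples n)"
      then show "(g x = ee) = (case x of (i, j, k) \<Rightarrow> triple_ijk f A i j k = triple_ijk f A i k j)"
        using gp by simp
    qed
    also have "\<dots> \<longleftrightarrow> ?R" unfolding setT by auto
    finally show ?thesis .
  qed
  also have "\<dots> \<longleftrightarrow> ipcm_consistent G f n A"
  proof -
    have "(\<forall>i j k. i < j \<longrightarrow> j < k \<longrightarrow> k < n \<longrightarrow> triple_ijk f A i j k = triple_ijk f A i k j)
      \<longleftrightarrow> (\<forall>i<n. \<forall>j<n. \<forall>k<n. triple_ijk f A i j k = triple_ijk f A i k j)"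
    proof
      assume "\<forall>i j k. i < j \<longrightarrow> j < k \<longrightarrow> k < n \<longrightarrow> triple_ijk f A i j k = triple_ijk f A i k j"
      then show "\<forall>i<n. \<forall>j<n. \<forall>k<n. triple_ijk f A i j k = triple_ijk f A i k j"
        by (rule all_from_sorted[OF assms(1)])
    next
      assume H: "\<forall>i<n. \<forall>j<n. \<forall>k<n. triple_ijk f A i j k = triple_ijk f A i k j"
      show "\<forall>i j k. i < j \<longrightarrow> j < k \<longrightarrow> k < n \<longrightarrow> triple_ijk f A i j k = triple_ijk f A i k j"
      proof (intro allI impI)
        fix i j k :: nat assume "i < j" "j < k" "k < n"
        then have "i < n" "j < n" by linarith+
        then show "triple_ijk f A i j k = triple_ijk f A i k j" using H \<open>k < n\<close> by blast
      qed
    qed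
    then show ?thesis using cons_iff[OF assms(1)] by simp
  qed
  finally have eqv: "(\<forall>x\<in>set (triples n). g x = ee) \<longleftrightarrow> ipcm_consistent G f n A" .
  show ?thesis unfolding ci using r P eqv by blast
qed

end

theorem proposition14:
  fixes G :: "real set" and f :: "real \<Rightarrow> real \<Rightarrow> real" and e :: real
    and n :: nat and A :: "nat \<Rightarrow> nat \<Rightarrow> real \<times> real"
  assumes "continuous_alo_group G f"
    and "open_interval G"
    and "e = alo_unit G f"
    and "is_IPCM G n A"
    and "ipcm_reciprocal G f n A"
    and "n \<ge> 3"
  shows "consistency_index G f n A \<ge> e
    \<and> (consistency_index G f n A = e \<longleftrightarrow> ipcm_consistent G f n A)"
proof -
  interpret aloC G f
    using assms(1,2) unfolding continuous_alo_group_def open_interval_def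
    by unfold_locales auto
  show ?thesis using main[OF assms(4,6)] assms(3) by simp
qed

end
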